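(* Let $n>1$ be an integer and let $k$ be an odd positive integer with $k<2^n$. Then there exist signs $\epsilon_1,\dots,\epsilon_{n-2}\in\{+1,-1\}$ (depending on $k$) such that $$\sin\Big(\frac{k\pi}{2^n}\Big)=\frac12\sqrt{2+\epsilon_1\sqrt{2+\epsilon_2\sqrt{2+\cdots+\epsilon_{n-2}\sqrt{2}}}},$$ where the square root sign appears $n-1$ times in total (for $n=2$ the right-hand side is $\frac12\sqrt2$). *)

theory Defs
  imports Complex_Main
begin

fun nested_rad :: "(nat \<Rightarrow> real) \<Rightarrow> nat \<Rightarrow> nat \<Rightarrow> real" where
  "nested_rad e i 0 = sqrt 2"
| "nested_rad e i (Suc m) = sqrt (2 + e i * nested_rad e (Suc i) m)"

end

theory Submission
  imports Defs
begin

lemma nested_rad_upd: "j < i \<Longrightarrow> nested_rad (f(j:=v)) i m = nested_rad f i m"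
  by (induction m arbitrary: i) auto

lemma sin_3pi2: "sin (3 * pi / 2) = -1"
proof -
  have "sin (3 * pi / 2) = sin (pi / 2 + pi)" by (rule arg_cong[where f=sin]) simp
  also have "\<dots> = -1" by (simp only: sin_periodic_pi sin_pi_half)
  finally show ?thesis .
qed

lemma cos_3pi2: "cos (3 * pi / 2) = 0"
proof -
  have "cos (3 * pi / 2) = cos (pi / 2 + pi)" by (rule arg_cong[where f=cos]) simp
  also have "\<dots> = 0" by (simp only: cos_periodic_pi cos_pi_half)
  finally show ?thesis .
qed

lemma two_sin_half:
  assumes "0 < x" "x < pi"
  shows "2 * sin x = sqrt (2 - 2 * cos (2 * x))"
proof -
  have "sin x > 0" using assms sin_gt_zero by auto
  have "2 - 2 * cos (2*x) = (2 * sin x)^2" by (simp add: cos_double_sin power2_eq_square)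
  thus ?thesis using \<open>sin x > 0\<close> by (metis less_eq_real_def mult_pos_pos real_sqrt_unique zero_less_numeral)
qed

lemma gen:
  "\<forall>i k. odd k \<and> k < 2^(m+2) \<longrightarrow> (\<exists>e :: nat \<Rightarrow> real. (\<forall>j\<in>{i..<i+m}. e j = 1 \<or> e j = -1) \<and>
     2 * sin (real k * pi / 2^(m+2)) = nested_rad e i m)"
proof (induction m)
  case 0
  show ?case
  proof (intro allI impI)
    fix i k :: nat assume h: "odd k \<and> k < 2^(0+2)"
    hence "k = 1 \<or> k = 3" by (auto simp: odd_pos) (presburger)
    hence "2 * sin (real k * pi / 2^(0+2)) = sqrt 2"
    proof
      assume "k = 1" thus ?thesis by (simp add: sin_45 real_sqrt_divide)
    next
      assume "k = 3"
      have a: "real k * pi / 2^(0+2) = pi - pi/4" using \<open>k = 3\<close> by simp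
      show ?thesis unfolding a sin_pi_minus by (simp add: sin_45)
    qed
    thus "\<exists>e :: nat \<Rightarrow> real. (\<forall>j\<in>{i..<i+0}. e j = 1 \<or> e j = -1) \<and>
     2 * sin (real k * pi / 2^(0+2)) = nested_rad e i 0" by simp
  qed
next
  case (Suc m)
  show ?case
  proof (intro allI impI)
    fix i k :: nat assume h: "odd k \<and> k < 2^(Suc m+2)"
    have kpos: "k > 0" using h by (auto intro: odd_pos)
    define x where "x = real k * pi / 2^(Suc m+2)"
    have x0: "0 < x" using kpos by (simp add: x_def)
    have "real k < 2^(Suc m+2)" using h by (metis of_nat_less_iff of_nat_numeral of_nat_power)
    hence x1: "x < pi" unfolding x_def by (simp add: divide_less_eq)
    have 2: "2*x = real k * pi / 2^(m+2)" by (simp add: x_def)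
    have sx: "2 * sin x = sqrt (2 - 2 * cos (real k * pi / 2^(m+2)))"
      using two_sin_half[OF x0 x1] 2 by simp
    have ev: "even ((2::nat)^(m+1))" by simp
    obtain s :: real and k' where s: "s = 1 \<or> s = -1" and k': "odd k'" "k' < 2^(m+2)"
      and c: "- cos (real k * pi / 2^(m+2)) = s * sin (real k' * pi / 2^(m+2))"
    proof (cases "k < 2^(m+1)")
      case True
      define k' where "k' = 2^(m+1) - k"
      have "odd k'" using h ev True unfolding k'_def by presburger
      moreover have "k' < 2^(m+2)" unfolding k'_def using kpos by (simp add: less_imp_diff_less)
      moreover have "real k' = 2^(m+1) - real k" unfolding k'_def using True
        by (simp add: of_nat_diff)
      note eqk = this
      have "real k' * pi / 2^(m+2) = pi/2 - real k * pi / 2^(m+2)"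
        unfolding eqk by (simp add: field_simps)
      hence "- cos (real k * pi / 2^(m+2)) = (-1) * sin (real k' * pi / 2^(m+2))"
        by (simp add: sin_cos_eq)
      ultimately show ?thesis using that by blast
    next
      case False
      have "k \<noteq> 2^(m+1)" using h ev by auto
      hence F: "2^(m+1) < k" using False by simp
      show ?thesis
      proof (cases "k < 3 * 2^(m+1)")
        case True
        define k' where "k' = k - 2^(m+1)"
        have "odd k'" using h ev F unfolding k'_def by presburger
        moreover have "k' < 2^(m+2)" unfolding k'_def using True by simp
        moreover have "real k' = real k - 2^(m+1)" unfolding k'_def using F
          by (simp add: of_nat_diff)
        note eqk = this
        have "real k' * pi / 2^(m+2) = real k * pi / 2^(m+2) - pi/2"
          unfolding eqk by (simp add: field_simps)
        hence "- cos (real k * pi / 2^(m+2)) = 1 * sin (real k' * pi / 2^(m+2))"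
          by (simp add: sin_diff)
        ultimately show ?thesis using that by blast
      next
        case False
        have "k \<noteq> 3 * 2^(m+1)" using h by auto
        hence F2: "3 * 2^(m+1) < k" using False by simp
        define k' where "k' = k - 3 * 2^(m+1)"
        have "odd k'" using h ev F2 unfolding k'_def by presburger
        moreover have "k' < 2^(m+2)" proof - have g: "\<And>a::nat. k < 8*a \<Longrightarrow> k - 6*a < 4*a" by linarith show ?thesis unfolding k'_def using h g[of "2^m"] by simp qed
        moreover have "real k' = real k - 3 * 2^(m+1)" unfolding k'_def using F2
          by (simp add: of_nat_diff)
        note eqk = this
        have a1: "real k' * pi / 2^(m+2) = real k * pi / 2^(m+2) - 3 * 2^(m+1) * pi / 2^(m+2)"
          unfolding eqk by (simp add: left_diff_distrib diff_divide_distrib)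
        have a2: "3 * 2^(m+1) * pi / 2^(m+2) = 3 * pi / (2::real)"
          by (simp add: power_Suc)
        have ang: "real k' * pi / 2^(m+2) = real k * pi / 2^(m+2) - 3 * pi / 2"
          using a1 a2 by simp
        have "sin (real k' * pi / 2^(m+2)) = cos (real k * pi / 2^(m+2))"
          unfolding ang by (simp only: sin_diff sin_3pi2 cos_3pi2)
        hence "- cos (real k * pi / 2^(m+2)) = (-1) * sin (real k' * pi / 2^(m+2))"
          by simp
        ultimately show ?thesis using that by blast
      qed
    qed
    from Suc[rule_format, of k' "Suc i"] k' obtain e where
      e: "\<forall>j\<in>{Suc i..<Suc i+m}. e j = 1 \<or> e j = -1"
      "2 * sin (real k' * pi / 2^(m+2)) = nested_rad e (Suc i) m" by auto
    define e' where "e' = e(i := s)"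
    have "\<forall>j\<in>{i..<i+Suc m}. e' j = 1 \<or> e' j = -1"
      using e(1) s unfolding e'_def by auto
    moreover have "2 * sin (real k * pi / 2^(Suc m+2)) = nested_rad e' i (Suc m)"
    proof -
      have "nested_rad e' i (Suc m) = sqrt (2 + s * nested_rad e (Suc i) m)"
        unfolding e'_def by (simp add: nested_rad_upd)
      also have "\<dots> = sqrt (2 - 2 * cos (real k * pi / 2^(m+2)))"
      proof -
        have "s * nested_rad e (Suc i) m = 2 * (s * sin (real k' * pi / 2^(m+2)))"
          by (simp only: e(2)[symmetric] mult.left_commute)
        also have "\<dots> = - 2 * cos (real k * pi / 2^(m+2))" by (simp only: c[symmetric])
        finally show ?thesis by simp
      qed
      finally show ?thesis using sx x_def by simp
    qed
    ultimately show "\<exists>e :: nat \<Rightarrow> real. (\<forall>j\<in>{i..<i+Suc m}. e j = 1 \<or> e j = -1) \<and>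
     2 * sin (real k * pi / 2^(Suc m+2)) = nested_rad e i (Suc m)" by blast
  qed
qed

theorem lemma3p3:
  fixes n k :: nat
  assumes "n > 1" and "odd k" and "k > 0" and "k < 2 ^ n"
  shows "\<exists>e :: nat \<Rightarrow> real. (\<forall>i\<in>{1..n-2}. e i = 1 \<or> e i = -1) \<and>
           sin (real k * pi / 2 ^ n) = 1/2 * nested_rad e 1 (n - 2)"
proof -
  have n: "n - 2 + 2 = n" using assms(1) by simp
  have p: "(2::real)^(n-2+2) = 2^n" using n by simp
  have "k < 2^(n-2+2)" using n assms by simp
  from gen[of "n-2", rule_format, of k 1, OF conjI[OF assms(2) this], unfolded p n] obtain e where
    "\<forall>j\<in>{1..<1+(n-2)}. e j = 1 \<or> e j = -1"
    "2 * sin (real k * pi / 2^n) = nested_rad e 1 (n-2)" by auto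
  moreover have "{1..n-2} = {1..<1+(n-2)}" by auto
  ultimately show ?thesis by (intro exI[of _ e]) auto
qed

end
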